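(* Let $R_1,R_2$ be commutative rings with nonzero identity, $I_1$ a proper ideal of $R_1$, $I_2$ a proper ideal of $R_2$, $R=R_1\times R_2$ and $I=I_1\times I_2$. If $\Gamma''_{I_1}(R_1)$ or $\Gamma''_{I_2}(R_2)$ is not planar, then $\Gamma''_I(R)$ is not planar.
   Context: $R_1\times R_2$ has componentwise operations. For a commutative ring $S$ and an ideal $J$ of $S$, $\Gamma''_J(S)$ is the simple undirected graph whose vertex set is $\{x\in S\setminus J : xS+J\neq S\}$, with distinct vertices $x,y$ adjacent if and only if $x\notin yS+J$ and $y\notin xS+J$. A graph is planar if it can be drawn in the plane with edges meeting only at their endpoints. *)

theory Defs
  imports "HOL-Analysis.Analysis" "HOL-Algebra.Chinese_Remainder"
begin

definition coset_ideal :: "('a, 'm) ring_scheme \<Rightarrow> 'a set \<Rightarrow> 'a \<Rightarrow> 'a set" where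
  "coset_ideal S J x = {x \<otimes>\<^bsub>S\<^esub> s \<oplus>\<^bsub>S\<^esub> j | s j. s \<in> carrier S \<and> j \<in> J}"

definition gamma2_verts :: "('a, 'm) ring_scheme \<Rightarrow> 'a set \<Rightarrow> 'a set" where
  "gamma2_verts S J = {x \<in> carrier S - J. coset_ideal S J x \<noteq> carrier S}"

definition gamma2_adj :: "('a, 'm) ring_scheme \<Rightarrow> 'a set \<Rightarrow> 'a \<Rightarrow> 'a \<Rightarrow> bool" where
  "gamma2_adj S J x y \<longleftrightarrow> x \<in> gamma2_verts S J \<and> y \<in> gamma2_verts S J \<and> x \<noteq> y \<and>
     x \<notin> coset_ideal S J y \<and> y \<notin> coset_ideal S J x"

definition planar :: "'a set \<Rightarrow> ('a \<Rightarrow> 'a \<Rightarrow> bool) \<Rightarrow> bool" where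
  "planar V E \<longleftrightarrow> (\<exists>(f :: 'a \<Rightarrow> complex) (g :: 'a set \<Rightarrow> real \<Rightarrow> complex).
     inj_on f V \<and>
     (\<forall>u\<in>V. \<forall>v\<in>V. E u v \<longrightarrow>
        arc (g {u, v}) \<and> {pathstart (g {u, v}), pathfinish (g {u, v})} = {f u, f v} \<and>
        path_image (g {u, v}) \<inter> f ` V \<subseteq> {f u, f v}) \<and>
     (\<forall>u\<in>V. \<forall>v\<in>V. \<forall>u'\<in>V. \<forall>v'\<in>V. E u v \<longrightarrow> E u' v' \<longrightarrow> {u, v} \<noteq> {u', v'} \<longrightarrow>
        path_image (g {u, v}) \<inter> path_image (g {u', v'}) \<subseteq> f ` ({u, v} \<inter> {u', v'})))"

end

theory Submission
  imports Defs
begin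

lemma RDP_mult: "(a, b) \<otimes>\<^bsub>RDirProd R S\<^esub> (c, d) = (a \<otimes>\<^bsub>R\<^esub> c, b \<otimes>\<^bsub>S\<^esub> d)"
  by (simp add: RDirProd_def DirProd_def monoid.defs)

lemma RDP_add: "(a, b) \<oplus>\<^bsub>RDirProd R S\<^esub> (c, d) = (a \<oplus>\<^bsub>R\<^esub> c, b \<oplus>\<^bsub>S\<^esub> d)"
  by (simp add: RDirProd_def DirProd_def monoid.defs)

lemma coset_prod:
  "coset_ideal (RDirProd R S) (I \<times> J) (x, y) = coset_ideal R I x \<times> coset_ideal S J y"
  unfolding coset_ideal_def
  by (auto simp: RDirProd_carrier RDP_mult RDP_add)

lemma coset_zero:
  assumes "ring S" "ideal J S"
  shows "coset_ideal S J \<zero>\<^bsub>S\<^esub> = J"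
proof -
  interpret ring S by fact
  have JS: "J \<subseteq> carrier S" using assms(2) by (simp add: ideal.axioms(1) additive_subgroup.a_subset)
  show ?thesis unfolding coset_ideal_def
  proof (safe)
    fix s j assume "s \<in> carrier S" "j \<in> J"
    then show "\<zero>\<^bsub>S\<^esub> \<otimes>\<^bsub>S\<^esub> s \<oplus>\<^bsub>S\<^esub> j \<in> J" using JS by auto
  next
    fix j assume "j \<in> J"
    then show "\<exists>s ja. j = \<zero>\<^bsub>S\<^esub> \<otimes>\<^bsub>S\<^esub> s \<oplus>\<^bsub>S\<^esub> ja \<and> s \<in> carrier S \<and> ja \<in> J"
      using JS by (intro exI[of _ "\<zero>\<^bsub>S\<^esub>"] exI[of _ j]) auto
  qed
qed

lemma coset_self:
  assumes "ring S" "ideal J S" "x \<in> carrier S"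
  shows "x \<in> coset_ideal S J x"
proof -
  interpret ring S by fact
  have "\<zero>\<^bsub>S\<^esub> \<in> J" using assms(2) by (simp add: additive_subgroup.zero_closed ideal.axioms(1))
  then show ?thesis unfolding coset_ideal_def using assms(3)
    by (intro CollectI exI[of _ "\<one>\<^bsub>S\<^esub>"] exI[of _ "\<zero>\<^bsub>S\<^esub>"]) auto
qed

lemma planar_sub:
  fixes V :: "'a set" and V' :: "'b set"
  assumes "planar V E" "inj_on h V'" "\<And>u. u \<in> V' \<Longrightarrow> h u \<in> V"
    "\<And>u v. u \<in> V' \<Longrightarrow> v \<in> V' \<Longrightarrow> E' u v \<Longrightarrow> E (h u) (h v)"
  shows "planar V' E'"
proof -
  obtain f :: "'a \<Rightarrow> complex" and g :: "'a set \<Rightarrow> real \<Rightarrow> complex" where f: "inj_on f V" and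
    g1: "\<forall>u\<in>V. \<forall>v\<in>V. E u v \<longrightarrow>
        arc (g {u, v}) \<and> {pathstart (g {u, v}), pathfinish (g {u, v})} = {f u, f v} \<and>
        path_image (g {u, v}) \<inter> f ` V \<subseteq> {f u, f v}" and
    g2: "\<forall>u\<in>V. \<forall>v\<in>V. \<forall>u'\<in>V. \<forall>v'\<in>V. E u v \<longrightarrow> E u' v' \<longrightarrow> {u, v} \<noteq> {u', v'} \<longrightarrow>
        path_image (g {u, v}) \<inter> path_image (g {u', v'}) \<subseteq> f ` ({u, v} \<inter> {u', v'})"
    using assms(1) unfolding planar_def by (elim exE conjE) blast
  have hV: "h ` V' \<subseteq> V" using assms(3) by blast
  show ?thesis unfolding planar_def
  proof (rule exI[of _ "f \<circ> h"], rule exI[of _ "\<lambda>S. g (h ` S)"], intro conjI[OF _ conjI]; (intro ballI impI)?)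
    show "inj_on (f \<circ> h) V'" using f assms(2) hV by (simp add: comp_inj_on inj_on_subset)
  next
    fix u v assume uv: "u \<in> V'" "v \<in> V'" "E' u v"
    have e: "E (h u) (h v)" using assms(4) uv by blast
    have im: "h ` {u, v} = {h u, h v}" by auto
    have hu: "h u \<in> V" "h v \<in> V" using assms(3) uv by auto
    have G: "arc (g {h u, h v}) \<and> {pathstart (g {h u, h v}), pathfinish (g {h u, h v})} = {f (h u), f (h v)} \<and>
        path_image (g {h u, h v}) \<inter> f ` V \<subseteq> {f (h u), f (h v)}"
      using g1 hu e by blast
    have "(f \<circ> h) ` V' \<subseteq> f ` V" using hV by auto
    then have "path_image (g {h u, h v}) \<inter> (f \<circ> h) ` V' \<subseteq> {f (h u), f (h v)}" using G by blast
    then show "arc (g (h ` {u, v})) \<and>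
         {pathstart (g (h ` {u, v})), pathfinish (g (h ` {u, v}))} = {(f \<circ> h) u, (f \<circ> h) v} \<and>
         path_image (g (h ` {u, v})) \<inter> (f \<circ> h) ` V' \<subseteq> {(f \<circ> h) u, (f \<circ> h) v}"
      using G unfolding im by simp
  next
    fix u v u' v' assume uv: "u \<in> V'" "v \<in> V'" "u' \<in> V'" "v' \<in> V'" "E' u v" "E' u' v'"
      "{u, v} \<noteq> {u', v'}"
    have e: "E (h u) (h v)" "E (h u') (h v')" using assms(4) uv by blast+
    have im: "h ` {u, v} = {h u, h v}" "h ` {u', v'} = {h u', h v'}" by auto
    have hi: "\<And>a b. a \<in> V' \<Longrightarrow> b \<in> V' \<Longrightarrow> h a = h b \<longleftrightarrow> a = b"
      using assms(2) by (meson inj_on_eq_iff)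
    have ne: "{h u, h v} \<noteq> {h u', h v'}"
    proof
      assume "{h u, h v} = {h u', h v'}"
      then have "(h u = h u' \<and> h v = h v') \<or> (h u = h v' \<and> h v = h u')" by (simp add: doubleton_eq_iff)
      then have "(u = u' \<and> v = v') \<or> (u = v' \<and> v = u')" using hi uv(1-4) by metis
      then show False using uv(7) by auto
    qed
    have inter: "h ` ({u, v} \<inter> {u', v'}) = h ` {u, v} \<inter> h ` {u', v'}"
      by (rule inj_on_image_Int[OF assms(2)]) (use uv(1-4) in auto)
    have hu: "h u \<in> V" "h v \<in> V" "h u' \<in> V" "h v' \<in> V" using assms(3) uv(1-4) by auto
    have "path_image (g {h u, h v}) \<inter> path_image (g {h u', h v'}) \<subseteq> f ` ({h u, h v} \<inter> {h u', h v'})"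
      using g2 hu e ne by blast
    also have "\<dots> = (f \<circ> h) ` ({u, v} \<inter> {u', v'})"
      unfolding image_comp[symmetric] inter im ..
    finally show "path_image (g (h ` {u, v})) \<inter> path_image (g (h ` {u', v'}))
          \<subseteq> (f \<circ> h) ` ({u, v} \<inter> {u', v'})" unfolding im .
  qed
qed

lemma embed_gen:
  assumes "cring R1" "cring R2" "ideal I1 R1" "ideal I2 R2" "I2 \<noteq> carrier R2"
    "\<not> planar (gamma2_verts R1 I1) (gamma2_adj R1 I1)"
  shows "\<not> planar (gamma2_verts (RDirProd R1 R2) (I1 \<times> I2)) (gamma2_adj (RDirProd R1 R2) (I1 \<times> I2))"
proof
  assume P: "planar (gamma2_verts (RDirProd R1 R2) (I1 \<times> I2)) (gamma2_adj (RDirProd R1 R2) (I1 \<times> I2))"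
  interpret A: cring R1 by fact
  interpret B: cring R2 by fact
  have z2: "\<zero>\<^bsub>R2\<^esub> \<in> I2" using assms(4) by (simp add: additive_subgroup.zero_closed ideal.axioms(1))
  have I2S: "I2 \<subseteq> carrier R2" using assms(4) by (simp add: ideal.axioms(1) additive_subgroup.a_subset)
  obtain b where b: "b \<in> carrier R2" "b \<notin> I2" using I2S assms(5) by blast
  have cz: "coset_ideal R2 I2 \<zero>\<^bsub>R2\<^esub> = I2" using coset_zero[OF cring.axioms(1)[OF assms(2)] assms(4)] .
  have cp: "\<And>x. coset_ideal (RDirProd R1 R2) (I1 \<times> I2) (x, \<zero>\<^bsub>R2\<^esub>) = coset_ideal R1 I1 x \<times> I2"
    by (simp only: coset_prod cz)
  have vert: "(x, \<zero>\<^bsub>R2\<^esub>) \<in> gamma2_verts (RDirProd R1 R2) (I1 \<times> I2)"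
    if "x \<in> gamma2_verts R1 I1" for x
  proof -
    have x: "x \<in> carrier R1" "x \<notin> I1" using that unfolding gamma2_verts_def by auto
    have "x \<in> coset_ideal R1 I1 x" using coset_self[OF cring.axioms(1)[OF assms(1)] assms(3) x(1)] .
    then have nb: "(x, b) \<notin> coset_ideal R1 I1 x \<times> I2" using b by auto
    have cb: "(x, b) \<in> carrier (RDirProd R1 R2)" using x b by (simp add: RDirProd_carrier)
    have c1: "(x, \<zero>\<^bsub>R2\<^esub>) \<in> carrier (RDirProd R1 R2)" using x B.zero_closed by (simp add: RDirProd_carrier)
    have c2: "(x, \<zero>\<^bsub>R2\<^esub>) \<notin> I1 \<times> I2" using x by auto
    have c3: "coset_ideal (RDirProd R1 R2) (I1 \<times> I2) (x, \<zero>\<^bsub>R2\<^esub>) \<noteq> carrier (RDirProd R1 R2)"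
      unfolding cp using nb cb by blast
    show ?thesis using c1 c2 c3 by (simp add: gamma2_verts_def)
  qed
  have "planar (gamma2_verts R1 I1) (gamma2_adj R1 I1)"
  proof (rule planar_sub[OF P, of "\<lambda>x. (x, \<zero>\<^bsub>R2\<^esub>)"])
    show "inj_on (\<lambda>x. (x, \<zero>\<^bsub>R2\<^esub>)) (gamma2_verts R1 I1)" by (auto simp: inj_on_def)
  next
    fix u assume "u \<in> gamma2_verts R1 I1" then show "(u, \<zero>\<^bsub>R2\<^esub>) \<in> gamma2_verts (RDirProd R1 R2) (I1 \<times> I2)"
      by (rule vert)
  next
    fix u v assume "u \<in> gamma2_verts R1 I1" "v \<in> gamma2_verts R1 I1" "gamma2_adj R1 I1 u v"
    then have uv: "u \<notin> coset_ideal R1 I1 v" "v \<notin> coset_ideal R1 I1 u" "u \<noteq> v"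
      "u \<in> gamma2_verts R1 I1" "v \<in> gamma2_verts R1 I1"
      unfolding gamma2_adj_def by auto
    show "gamma2_adj (RDirProd R1 R2) (I1 \<times> I2) (u, \<zero>\<^bsub>R2\<^esub>) (v, \<zero>\<^bsub>R2\<^esub>)"
      unfolding gamma2_adj_def cp using vert[OF uv(4)] vert[OF uv(5)] uv(1-3) by simp
  qed
  then show False using assms(6) by blast
qed

lemma embed_gen2:
  assumes "cring R1" "cring R2" "ideal I1 R1" "ideal I2 R2" "I1 \<noteq> carrier R1"
    "\<not> planar (gamma2_verts R2 I2) (gamma2_adj R2 I2)"
  shows "\<not> planar (gamma2_verts (RDirProd R1 R2) (I1 \<times> I2)) (gamma2_adj (RDirProd R1 R2) (I1 \<times> I2))"
proof
  assume P: "planar (gamma2_verts (RDirProd R1 R2) (I1 \<times> I2)) (gamma2_adj (RDirProd R1 R2) (I1 \<times> I2))"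
  interpret A: cring R1 by fact
  interpret B: cring R2 by fact
  have I1S: "I1 \<subseteq> carrier R1" using assms(3) by (simp add: ideal.axioms(1) additive_subgroup.a_subset)
  obtain b where b: "b \<in> carrier R1" "b \<notin> I1" using I1S assms(5) by blast
  have cz: "coset_ideal R1 I1 \<zero>\<^bsub>R1\<^esub> = I1" using coset_zero[OF cring.axioms(1)[OF assms(1)] assms(3)] .
  have cp: "\<And>x. coset_ideal (RDirProd R1 R2) (I1 \<times> I2) (\<zero>\<^bsub>R1\<^esub>, x) = I1 \<times> coset_ideal R2 I2 x"
    by (simp only: coset_prod cz)
  have vert: "(\<zero>\<^bsub>R1\<^esub>, x) \<in> gamma2_verts (RDirProd R1 R2) (I1 \<times> I2)"
    if "x \<in> gamma2_verts R2 I2" for x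
  proof -
    have x: "x \<in> carrier R2" "x \<notin> I2" using that unfolding gamma2_verts_def by auto
    have "x \<in> coset_ideal R2 I2 x" using coset_self[OF cring.axioms(1)[OF assms(2)] assms(4) x(1)] .
    then have nb: "(b, x) \<notin> I1 \<times> coset_ideal R2 I2 x" using b by auto
    have cb: "(b, x) \<in> carrier (RDirProd R1 R2)" using x b by (simp add: RDirProd_carrier)
    have c1: "(\<zero>\<^bsub>R1\<^esub>, x) \<in> carrier (RDirProd R1 R2)" using x A.zero_closed by (simp add: RDirProd_carrier)
    have c2: "(\<zero>\<^bsub>R1\<^esub>, x) \<notin> I1 \<times> I2" using x by auto
    have c3: "coset_ideal (RDirProd R1 R2) (I1 \<times> I2) (\<zero>\<^bsub>R1\<^esub>, x) \<noteq> carrier (RDirProd R1 R2)"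
      unfolding cp using nb cb by blast
    show ?thesis using c1 c2 c3 by (simp add: gamma2_verts_def)
  qed
  have "planar (gamma2_verts R2 I2) (gamma2_adj R2 I2)"
  proof (rule planar_sub[OF P, of "\<lambda>x. (\<zero>\<^bsub>R1\<^esub>, x)"])
    show "inj_on (\<lambda>x. (\<zero>\<^bsub>R1\<^esub>, x)) (gamma2_verts R2 I2)" by (auto simp: inj_on_def)
  next
    fix u assume "u \<in> gamma2_verts R2 I2" then show "(\<zero>\<^bsub>R1\<^esub>, u) \<in> gamma2_verts (RDirProd R1 R2) (I1 \<times> I2)"
      by (rule vert)
  next
    fix u v assume "u \<in> gamma2_verts R2 I2" "v \<in> gamma2_verts R2 I2" "gamma2_adj R2 I2 u v"
    then have uv: "u \<notin> coset_ideal R2 I2 v" "v \<notin> coset_ideal R2 I2 u" "u \<noteq> v"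
      "u \<in> gamma2_verts R2 I2" "v \<in> gamma2_verts R2 I2"
      unfolding gamma2_adj_def by auto
    show "gamma2_adj (RDirProd R1 R2) (I1 \<times> I2) (\<zero>\<^bsub>R1\<^esub>, u) (\<zero>\<^bsub>R1\<^esub>, v)"
      unfolding gamma2_adj_def cp using vert[OF uv(4)] vert[OF uv(5)] uv(1-3) by simp
  qed
  then show False using assms(6) by blast
qed

theorem corollary2p4:
  fixes R1 :: "('a, 'm) ring_scheme" and R2 :: "('b, 'n) ring_scheme"
    and I1 :: "'a set" and I2 :: "'b set"
  assumes "cring R1" and "cring R2"
    and "\<one>\<^bsub>R1\<^esub> \<noteq> \<zero>\<^bsub>R1\<^esub>" and "\<one>\<^bsub>R2\<^esub> \<noteq> \<zero>\<^bsub>R2\<^esub>"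
    and "ideal I1 R1" and "I1 \<noteq> carrier R1"
    and "ideal I2 R2" and "I2 \<noteq> carrier R2"
    and "\<not> planar (gamma2_verts R1 I1) (gamma2_adj R1 I1) \<or>
         \<not> planar (gamma2_verts R2 I2) (gamma2_adj R2 I2)"
  shows "\<not> planar (gamma2_verts (RDirProd R1 R2) (I1 \<times> I2)) (gamma2_adj (RDirProd R1 R2) (I1 \<times> I2))"
  using embed_gen[OF assms(1,2,5,7,8)] embed_gen2[OF assms(1,2,5,7,6)] assms(9) by blast

end
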